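(* Let $E$ be a linear subspace of $\mathbb{R}^n$ and $p_E$ the orthogonal projection onto $E$. Let $\mu$ be a Borel probability measure on $\mathbb{R}^n$ and $\nu$ a Borel probability measure on $E$. Let $\rho=(\mathrm{Id}\times p_E)_\#\mu$ (a transference plan between $\mu$ and $(p_E)_\#\mu$) and let $\sigma$ be an optimal transference plan between $(p_E)_\#\mu$ and $\nu$ for the quadratic cost. If $\mathrm{Spt}((p_E)_\#\mu)$ is compact, then for every gluing $\Gamma$ of $\rho$ and $\sigma$, the measure $\pi^{13}_\#\Gamma$ is an optimal transference plan between $\mu$ and $\nu$ for the quadratic cost $|x-z|^2$.
   Context: Transference plans between probability measures $\mu_1,\mu_2$ are probability measures on the product with marginals $\mu_1,\mu_2$; optimal for the quadratic cost means minimizing $\int|x-y|^2\,d\rho(x,y)$ among them. Given probability measures $\mu_i$ on $X_i$ ($i=1,2,3$), a transference plan $\rho_{12}$ between $\mu_1,\mu_2$ and $\rho_{23}$ between $\mu_2,\mu_3$, a gluing of $\rho_{12}$ and $\rho_{23}$ is a probability measure $\Gamma$ on $X_1\times X_2\times X_3$ whose marginals on $X_1\times X_2$ and $X_2\times X_3$ are $\rho_{12}$ and $\rho_{23}$. Here $\pi^{13}(x_1,x_2,x_3)=(x_1,x_3)$. Here $X_1=\mathbb{R}^n$, $X_2=X_3=E$. *)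

theory Defs
  imports "HOL-Analysis.Analysis" "HOL-Probability.Probability"
begin

definition orth_proj :: "'a::euclidean_space set \<Rightarrow> 'a \<Rightarrow> 'a" where
  "orth_proj E x = (THE y. y \<in> E \<and> (\<forall>e\<in>E. (x - y) \<bullet> e = 0))"

definition borel_prob :: "'a::topological_space measure \<Rightarrow> bool" where
  "borel_prob M \<longleftrightarrow> prob_space M \<and> sets M = sets borel"

definition measure_support :: "'a::topological_space measure \<Rightarrow> 'a set" where
  "measure_support M = {x. \<forall>U. open U \<and> x \<in> U \<longrightarrow> emeasure M U > 0}"

definition transference_plan ::
  "'a::topological_space measure \<Rightarrow> 'b::topological_space measure \<Rightarrow> ('a \<times> 'b) measure \<Rightarrow> bool" where
  "transference_plan \<mu>1 \<mu>2 \<rho> \<longleftrightarrow> borel_prob \<rho> \<and>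
     distr \<rho> borel fst = \<mu>1 \<and> distr \<rho> borel snd = \<mu>2"

definition quad_cost :: "('a::real_normed_vector \<times> 'a) measure \<Rightarrow> ennreal" where
  "quad_cost \<rho> = (\<integral>\<^sup>+ p. ennreal ((norm (fst p - snd p))\<^sup>2) \<partial>\<rho>)"

definition optimal_plan ::
  "'a::{real_normed_vector,topological_space} measure \<Rightarrow> 'a measure \<Rightarrow> ('a \<times> 'a) measure \<Rightarrow> bool" where
  "optimal_plan \<mu>1 \<mu>2 \<rho> \<longleftrightarrow> transference_plan \<mu>1 \<mu>2 \<rho> \<and>
     (\<forall>\<rho>'. transference_plan \<mu>1 \<mu>2 \<rho>' \<longrightarrow> quad_cost \<rho> \<le> quad_cost \<rho>')"

definition gluing ::
  "('a::topological_space \<times> 'b::topological_space) measure \<Rightarrow> ('b \<times> 'c::topological_space) measure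
     \<Rightarrow> ('a \<times> 'b \<times> 'c) measure \<Rightarrow> bool" where
  "gluing \<rho>12 \<rho>23 \<Gamma> \<longleftrightarrow> borel_prob \<Gamma> \<and>
     distr \<Gamma> borel (\<lambda>(x1, x2, x3). (x1, x2)) = \<rho>12 \<and>
     distr \<Gamma> borel (\<lambda>(x1, x2, x3). (x2, x3)) = \<rho>23"

end

theory Submission
  imports Defs
begin

lemma orth_proj_char:
  fixes E :: "'a::euclidean_space set"
  assumes "subspace E"
  shows "orth_proj E x \<in> E \<and> (\<forall>e\<in>E. (x - orth_proj E x) \<bullet> e = 0)"
proof -
  obtain y z where y: "y \<in> span E" and z: "\<And>w. w \<in> span E \<Longrightarrow> orthogonal z w" and xyz: "x = y + z"
    using orthogonal_subspace_decomp_exists by blast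
  have sE: "span E = E" using assms by (simp add: span_eq_iff)
  have P: "y \<in> E \<and> (\<forall>e\<in>E. (x - y) \<bullet> e = 0)"
    using y z xyz sE by (auto simp: orthogonal_def)
  have U: "y' = y" if "y' \<in> E \<and> (\<forall>e\<in>E. (x - y') \<bullet> e = 0)" for y'
  proof -
    have d: "y - y' \<in> E" using that P assms by (simp add: subspace_diff)
    have "(x - y') \<bullet> (y - y') - (x - y) \<bullet> (y - y') = 0" using that P d by simp
    hence "(y - y') \<bullet> (y - y') = 0" by (simp add: algebra_simps inner_diff_left inner_diff_right)
    thus ?thesis by simp
  qed
  have "orth_proj E x = y" unfolding orth_proj_def
    using P U by (rule the_equality)
  with P show ?thesis by simp
qed

lemma orth_proj_unique:
  fixes E :: "'a::euclidean_space set"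
  assumes "subspace E" "y \<in> E" "\<forall>e\<in>E. (x - y) \<bullet> e = 0"
  shows "orth_proj E x = y"
proof -
  have P: "orth_proj E x \<in> E \<and> (\<forall>e\<in>E. (x - orth_proj E x) \<bullet> e = 0)" using orth_proj_char[OF assms(1)] .
  have d: "y - orth_proj E x \<in> E" using P assms by (simp add: subspace_diff)
  have "(x - orth_proj E x) \<bullet> (y - orth_proj E x) - (x - y) \<bullet> (y - orth_proj E x) = 0" using assms P d by simp
  hence "(y - orth_proj E x) \<bullet> (y - orth_proj E x) = 0" by (simp add: algebra_simps inner_diff_left inner_diff_right)
  thus ?thesis by simp
qed

lemma orth_proj_linear:
  fixes E :: "'a::euclidean_space set"
  assumes "subspace E"
  shows "linear (orth_proj E)"
proof
  fix a b
  show "orth_proj E (a + b) = orth_proj E a + orth_proj E b"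
    apply (rule orth_proj_unique[OF assms])
    using orth_proj_char[OF assms, of a] orth_proj_char[OF assms, of b] assms
    by (auto simp: subspace_add algebra_simps inner_diff_left inner_add_left)
next
  fix c :: real and a
  show "orth_proj E (c *\<^sub>R a) = c *\<^sub>R orth_proj E a"
    apply (rule orth_proj_unique[OF assms])
    using orth_proj_char[OF assms, of a] assms
    by (auto simp: subspace_scale algebra_simps inner_diff_left)
qed

lemma orth_proj_meas:
  fixes E :: "'a::euclidean_space set"
  assumes "subspace E"
  shows "orth_proj E \<in> borel_measurable borel"
  apply (rule borel_measurable_continuous_onI)
  apply (rule linear_continuous_on)
  using orth_proj_linear[OF assms] by (simp add: linear_conv_bounded_linear)

lemma orth_proj_pyth:
  fixes E :: "'a::euclidean_space set"
  assumes "subspace E" "z \<in> E"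
  shows "(norm (x - z))\<^sup>2 = (norm (x - orth_proj E x))\<^sup>2 + (norm (orth_proj E x - z))\<^sup>2"
proof -
  have "orthogonal (x - orth_proj E x) (orth_proj E x - z)"
    using orth_proj_char[OF assms(1), of x] assms by (auto simp: orthogonal_def subspace_diff)
  from norm_add_Pythagorean[OF this] show ?thesis by simp
qed

lemma meas_cont:
  fixes g :: "'a::topological_space \<Rightarrow> 'b::topological_space"
  assumes "continuous_on UNIV g" "sets M = sets borel"
  shows "g \<in> measurable M borel"
proof -
  have "measurable M (borel::'b measure) = measurable borel borel" by (rule measurable_cong_sets[OF assms(2) refl])
  thus ?thesis using borel_measurable_continuous_onI[OF assms(1)] by simp
qed

lemma meas_cont_enn:
  fixes g :: "'a::topological_space \<Rightarrow> real"
  assumes "continuous_on UNIV g" "sets M = sets borel"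
  shows "(\<lambda>x. ennreal (g x)) \<in> borel_measurable M"
  using meas_cont[OF assms] by measurable

theorem mainTheorem4:
  fixes E :: "(real ^ 'n) set"
    and \<mu> \<nu> :: "(real ^ 'n) measure"
    and \<sigma> :: "((real ^ 'n) \<times> (real ^ 'n)) measure"
    and \<Gamma> :: "((real ^ 'n) \<times> (real ^ 'n) \<times> (real ^ 'n)) measure"
  assumes "subspace E"
    and "borel_prob \<mu>"
    and "borel_prob \<nu>" and "emeasure \<nu> E = 1"
    and "optimal_plan (distr \<mu> borel (orth_proj E)) \<nu> \<sigma>"
    and "compact (measure_support (distr \<mu> borel (orth_proj E)))"
    and "gluing (distr \<mu> borel (\<lambda>x. (x, orth_proj E x))) \<sigma> \<Gamma>"
  shows "optimal_plan \<mu> \<nu> (distr \<Gamma> borel (\<lambda>(x1, x2, x3). (x1, x3)))"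
proof -
  define p where "p = orth_proj E"
  have sub: "subspace E" by fact
  have cp: "continuous_on UNIV p" unfolding p_def
    apply (rule linear_continuous_on)
    using orth_proj_linear[OF sub] by (simp add: linear_conv_bounded_linear)
  have cpc: "continuous_on UNIV (\<lambda>x. p (f x))" if "continuous_on UNIV f" for f :: "'z::topological_space \<Rightarrow> real^'n"
    using continuous_on_compose2[OF cp that] by simp
  have pyth: "(norm (x - z))\<^sup>2 = (norm (x - p x))\<^sup>2 + (norm (p x - z))\<^sup>2" if "z \<in> E" for x z
    unfolding p_def using orth_proj_pyth[OF sub that] .
  have Ecl: "closed E" using sub by (simp add: closed_subspace)
  have Eb: "E \<in> sets borel" using Ecl by simp
  have mu: "prob_space \<mu>" "sets \<mu> = sets borel" using assms(2) by (auto simp: borel_prob_def)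
  have nu: "prob_space \<nu>" "sets \<nu> = sets borel" using assms(3) by (auto simp: borel_prob_def)
  have sig: "transference_plan (distr \<mu> borel p) \<nu> \<sigma>"
    and sigopt: "\<And>\<rho>'. transference_plan (distr \<mu> borel p) \<nu> \<rho>' \<Longrightarrow> quad_cost \<sigma> \<le> quad_cost \<rho>'"
    using assms(5) by (auto simp: optimal_plan_def p_def)
  have sigsnd: "distr \<sigma> borel snd = \<nu>" using sig by (simp add: transference_plan_def)
  have G: "prob_space \<Gamma>" "sets \<Gamma> = sets borel"
    and G12: "distr \<Gamma> borel (\<lambda>(x1, x2, x3). (x1, x2)) = distr \<mu> borel (\<lambda>x. (x, p x))"
    and G23: "distr \<Gamma> borel (\<lambda>(x1, x2, x3). (x2, x3)) = \<sigma>"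
    using assms(7) by (auto simp: gluing_def borel_prob_def p_def)
  have nuAE: "AE x in \<nu>. x \<in> E"
  proof -
    have "measure \<nu> E = 1" using assms(4) by (simp add: measure_def)
    thus ?thesis using prob_space.AE_prob_1[OF nu(1)] by blast
  qed
  have AEsnd: "AE q in M. snd q \<in> E" if "distr M borel snd = \<nu>" "sets M = sets borel"
    for M :: "((real^'n) \<times> (real^'n)) measure"
  proof -
    have m: "snd \<in> measurable M borel" by (rule meas_cont[OF _ that(2)]) (intro continuous_intros)
    have "AE x in distr M borel snd. x \<in> E" unfolding that(1) by (rule nuAE)
    thus ?thesis using AE_distr_iff[OF m, of "\<lambda>x. x \<in> E"] Eb by simp
  qed
  have m13: "(\<lambda>(x1, x2, x3). (x1, x3)) \<in> measurable \<Gamma> borel"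
    unfolding case_prod_unfold by (rule meas_cont[OF _ G(2)]) (intro continuous_intros)
  have m12: "(\<lambda>(x1, x2, x3). (x1, x2)) \<in> measurable \<Gamma> borel"
    unfolding case_prod_unfold by (rule meas_cont[OF _ G(2)]) (intro continuous_intros)
  have m23: "(\<lambda>(x1, x2, x3). (x2, x3)) \<in> measurable \<Gamma> borel"
    unfolding case_prod_unfold by (rule meas_cont[OF _ G(2)]) (intro continuous_intros)
  have mgr: "(\<lambda>x. (x, p x)) \<in> measurable \<mu> borel"
    by (rule meas_cont[OF _ mu(2)]) (intro continuous_intros cpc)
  have mfst: "fst \<in> measurable (borel :: ((real^'n) \<times> (real^'n)) measure) borel"
    by (rule meas_cont) (auto intro: continuous_intros)
  have msnd: "snd \<in> measurable (borel :: ((real^'n) \<times> (real^'n)) measure) borel"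
    by (rule meas_cont) (auto intro: continuous_intros)
  define \<pi> where "\<pi> = distr \<Gamma> borel (\<lambda>(x1, x2, x3). (x1, x3))"
  have pi_fst: "distr \<pi> borel fst = \<mu>"
  proof -
    have "distr \<pi> borel fst = distr \<Gamma> borel (fst \<circ> (\<lambda>(x1, x2, x3). (x1, x3)))"
      unfolding \<pi>_def by (rule distr_distr[OF mfst m13])
    also have "\<dots> = distr \<Gamma> borel (fst \<circ> (\<lambda>(x1, x2, x3). (x1, x2)))"
      by (rule distr_cong) (auto simp: split_beta)
    also have "\<dots> = distr (distr \<Gamma> borel (\<lambda>(x1, x2, x3). (x1, x2))) borel fst"
      by (rule distr_distr[OF mfst m12, symmetric])
    also have "\<dots> = distr \<mu> borel (fst \<circ> (\<lambda>x. (x, p x)))"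
      unfolding G12 by (rule distr_distr[OF mfst mgr])
    also have "\<dots> = distr \<mu> borel (\<lambda>x. x)" by (simp add: comp_def)
    also have "\<dots> = \<mu>" using distr_id2[of borel \<mu>] mu(2) by simp
    finally show ?thesis .
  qed
  have pi_snd: "distr \<pi> borel snd = \<nu>"
  proof -
    have "distr \<pi> borel snd = distr \<Gamma> borel (snd \<circ> (\<lambda>(x1, x2, x3). (x1, x3)))"
      unfolding \<pi>_def by (rule distr_distr[OF msnd m13])
    also have "\<dots> = distr \<Gamma> borel (snd \<circ> (\<lambda>(x1, x2, x3). (x2, x3)))"
      by (rule distr_cong) (auto simp: split_beta)
    also have "\<dots> = distr (distr \<Gamma> borel (\<lambda>(x1, x2, x3). (x2, x3))) borel snd"
      by (rule distr_distr[OF msnd m23, symmetric])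
    also have "\<dots> = \<nu>" using G23 sigsnd by simp
    finally show ?thesis .
  qed
  have pi_tp: "transference_plan \<mu> \<nu> \<pi>"
    unfolding transference_plan_def borel_prob_def
    using pi_fst pi_snd prob_space.prob_space_distr[OF G(1) m13] by (simp add: \<pi>_def)
  have sigs: "sets \<sigma> = sets borel" using sig by (simp add: transference_plan_def borel_prob_def)
  have setE: "{x \<in> space borel. snd x \<in> E} \<in> sets (borel :: ((real^'n) \<times> (real^'n)) measure)"
    using measurable_sets[OF msnd Eb] by (simp add: vimage_def Int_def conj_commute)
  have gr_closed: "closed {q :: (real^'n) \<times> (real^'n). snd q = p (fst q)}"
    by (rule closed_Collect_eq) (auto intro!: continuous_intros cpc)
  have setG: "{x \<in> space borel. snd x = p (fst x)} \<in> sets (borel :: ((real^'n) \<times> (real^'n)) measure)"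
    using borel_closed[OF gr_closed] by simp
  have AE3: "AE w in \<Gamma>. snd (snd w) \<in> E"
  proof -
    have "AE q in distr \<Gamma> borel (\<lambda>(x1, x2, x3). (x2, x3)). snd q \<in> E"
      unfolding G23 by (rule AEsnd[OF sigsnd sigs])
    thus ?thesis using AE_distr_iff[OF m23 setE] by (simp add: split_beta)
  qed
  have AE2: "AE w in \<Gamma>. fst (snd w) = p (fst w)"
  proof -
    have "AE q in distr \<mu> borel (\<lambda>x. (x, p x)). snd q = p (fst q)"
      using AE_distr_iff[OF mgr setG] by simp
    hence "AE q in distr \<Gamma> borel (\<lambda>(x1, x2, x3). (x1, x2)). snd q = p (fst q)"
      unfolding G12 .
    thus ?thesis using AE_distr_iff[OF m12 setG] by (simp add: split_beta)
  qed
  have mq: "(\<lambda>q::(real^'n)\<times>(real^'n). ennreal ((norm (fst q - snd q))\<^sup>2)) \<in> borel_measurable M"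
    if "sets M = sets borel" for M
    by (rule meas_cont_enn[OF _ that]) (auto intro!: continuous_intros)
  define A where "A = (\<integral>\<^sup>+ x. ennreal ((norm (x - p x))\<^sup>2) \<partial>\<mu>)"
  have qcA: "quad_cost (distr \<mu> borel (\<lambda>x. (x, p x))) = A"
    unfolding quad_cost_def A_def
    using nn_integral_distr[OF mgr mq[OF sets_distr]] by (simp add: case_prod_unfold)
  have cost_pi: "quad_cost \<pi> = A + quad_cost \<sigma>"
  proof -
    have "quad_cost \<pi> = (\<integral>\<^sup>+ w. ennreal ((norm (fst w - snd (snd w)))\<^sup>2) \<partial>\<Gamma>)"
      unfolding quad_cost_def \<pi>_def
      by (subst nn_integral_distr[OF m13 mq[OF sets_distr]], rule nn_integral_cong, simp add: case_prod_unfold)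
    also have "\<dots> = (\<integral>\<^sup>+ w. ennreal ((norm (fst w - fst (snd w)))\<^sup>2) + ennreal ((norm (fst (snd w) - snd (snd w)))\<^sup>2) \<partial>\<Gamma>)"
    proof (rule nn_integral_cong_AE)
      show "AE w in \<Gamma>. ennreal ((norm (fst w - snd (snd w)))\<^sup>2) = ennreal ((norm (fst w - fst (snd w)))\<^sup>2) + ennreal ((norm (fst (snd w) - snd (snd w)))\<^sup>2)"
        using AE2 AE3 proof eventually_elim
        case (elim w)
        have e: "(norm (fst w - snd (snd w)))\<^sup>2 = (norm (fst w - fst (snd w)))\<^sup>2 + (norm (fst (snd w) - snd (snd w)))\<^sup>2"
          using pyth[OF elim(2), of "fst w"] elim(1) by simp
        show ?case unfolding e by (rule ennreal_plus) auto
      qed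
    qed
    also have "\<dots> = (\<integral>\<^sup>+ w. ennreal ((norm (fst w - fst (snd w)))\<^sup>2) \<partial>\<Gamma>) + (\<integral>\<^sup>+ w. ennreal ((norm (fst (snd w) - snd (snd w)))\<^sup>2) \<partial>\<Gamma>)"
      by (rule nn_integral_add; rule meas_cont_enn[OF _ G(2)]; intro continuous_intros)
    also have "(\<integral>\<^sup>+ w. ennreal ((norm (fst w - fst (snd w)))\<^sup>2) \<partial>\<Gamma>) = quad_cost (distr \<Gamma> borel (\<lambda>(x1, x2, x3). (x1, x2)))"
      unfolding quad_cost_def
      by (subst nn_integral_distr[OF m12 mq[OF sets_distr]], rule nn_integral_cong, simp add: case_prod_unfold)
    also have "(\<integral>\<^sup>+ w. ennreal ((norm (fst (snd w) - snd (snd w)))\<^sup>2) \<partial>\<Gamma>) = quad_cost (distr \<Gamma> borel (\<lambda>(x1, x2, x3). (x2, x3)))"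
      unfolding quad_cost_def
      by (subst nn_integral_distr[OF m23 mq[OF sets_distr]], rule nn_integral_cong, simp add: case_prod_unfold)
    finally show ?thesis using G12 G23 qcA by simp
  qed
  have "quad_cost \<pi> \<le> quad_cost \<rho>'" if tp: "transference_plan \<mu> \<nu> \<rho>'" for \<rho>'
  proof -
    have rs: "sets \<rho>' = sets borel" "prob_space \<rho>'" and rf: "distr \<rho>' borel fst = \<mu>"
      and rsn: "distr \<rho>' borel snd = \<nu>"
      using tp by (auto simp: transference_plan_def borel_prob_def)
    have AEr: "AE q in \<rho>'. snd q \<in> E" by (rule AEsnd[OF rsn rs(1)])
    define T where "T = (\<lambda>q::(real^'n) \<times> (real^'n). (p (fst q), snd q))"
    have mT: "T \<in> measurable \<rho>' borel" unfolding T_def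
      by (rule meas_cont[OF _ rs(1)]) (auto intro!: continuous_intros cpc)
    have mfr: "fst \<in> measurable \<rho>' borel" by (rule meas_cont[OF _ rs(1)]) (intro continuous_intros)
    have tpT: "transference_plan (distr \<mu> borel p) \<nu> (distr \<rho>' borel T)"
    proof -
      have mp: "p \<in> measurable (borel :: (real^'n) measure) borel" by (rule meas_cont[OF cp]) simp
      have "distr (distr \<rho>' borel T) borel fst = distr \<rho>' borel (fst \<circ> T)"
        by (rule distr_distr[OF mfst mT])
      also have "\<dots> = distr \<rho>' borel (p \<circ> fst)" by (simp add: T_def comp_def)
      also have "\<dots> = distr (distr \<rho>' borel fst) borel p" by (rule distr_distr[OF mp mfr, symmetric])
      finally have 1: "distr (distr \<rho>' borel T) borel fst = distr \<mu> borel p" using rf by simp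
      have "distr (distr \<rho>' borel T) borel snd = distr \<rho>' borel (snd \<circ> T)"
        by (rule distr_distr[OF msnd mT])
      also have "\<dots> = distr \<rho>' borel snd" by (simp add: T_def comp_def)
      finally have 2: "distr (distr \<rho>' borel T) borel snd = \<nu>" using rsn by simp
      show ?thesis unfolding transference_plan_def borel_prob_def
        using 1 2 prob_space.prob_space_distr[OF rs(2) mT] by simp
    qed
    have "quad_cost \<rho>' = (\<integral>\<^sup>+ q. ennreal ((norm (fst q - p (fst q)))\<^sup>2) + ennreal ((norm (p (fst q) - snd q))\<^sup>2) \<partial>\<rho>')"
      unfolding quad_cost_def
    proof (rule nn_integral_cong_AE)
      show "AE q in \<rho>'. ennreal ((norm (fst q - snd q))\<^sup>2) = ennreal ((norm (fst q - p (fst q)))\<^sup>2) + ennreal ((norm (p (fst q) - snd q))\<^sup>2)"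
        using AEr proof eventually_elim
        case (elim q)
        show ?case unfolding pyth[OF elim, of "fst q"] by (rule ennreal_plus) auto
      qed
    qed
    also have "\<dots> = (\<integral>\<^sup>+ q. ennreal ((norm (fst q - p (fst q)))\<^sup>2) \<partial>\<rho>') + (\<integral>\<^sup>+ q. ennreal ((norm (p (fst q) - snd q))\<^sup>2) \<partial>\<rho>')"
      by (rule nn_integral_add; rule meas_cont_enn[OF _ rs(1)]; auto intro!: continuous_intros cpc)
    also have "(\<integral>\<^sup>+ q. ennreal ((norm (fst q - p (fst q)))\<^sup>2) \<partial>\<rho>') = A"
    proof -
      have "A = (\<integral>\<^sup>+ x. ennreal ((norm (x - p x))\<^sup>2) \<partial>(distr \<rho>' borel fst))" unfolding A_def rf ..
      also have "\<dots> = (\<integral>\<^sup>+ q. ennreal ((norm (fst q - p (fst q)))\<^sup>2) \<partial>\<rho>')"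
        by (rule nn_integral_distr[OF mfr], rule meas_cont_enn[OF _ sets_distr], auto intro!: continuous_intros cpc)
      finally show ?thesis by simp
    qed
    also have "(\<integral>\<^sup>+ q. ennreal ((norm (p (fst q) - snd q))\<^sup>2) \<partial>\<rho>') = quad_cost (distr \<rho>' borel T)"
      unfolding quad_cost_def
      by (subst nn_integral_distr[OF mT mq[OF sets_distr]], rule nn_integral_cong, simp add: T_def)
    finally have fin: "quad_cost \<rho>' = A + quad_cost (distr \<rho>' borel T)" .
    have "quad_cost \<sigma> \<le> quad_cost (distr \<rho>' borel T)" by (rule sigopt[OF tpT])
    thus ?thesis unfolding cost_pi fin by (rule add_left_mono)
  qed
  thus ?thesis using pi_tp unfolding optimal_plan_def \<pi>_def by blast
qed
end
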